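(* Let $V$ be a nonempty finite set and let $B \subseteq \mathbb{Z}^V$ be a nonempty set satisfying ($\Delta$-EXC): for any $p, q \in B$ and any $u \in \operatorname{supp}(q-p)$, there exists $\alpha \in \Phi_B(p,q)$ with $u \in \operatorname{supp}(\alpha)$. Then $B$ is hole-free, i.e., $B = \operatorname{conv}(B) \cap \mathbb{Z}^V$.
   Context: For $t \in \mathbb{R}^V$, $\operatorname{supp}(t) = \{u \in V : t(u) \neq 0\}$; $\|p\|_1 = \sum_{u \in V}|p(u)|$; $\chi_u$ is the $u$-th unit vector; $\operatorname{conv}$ denotes convex hull. Let $\Phi = \{\pm \chi_u : u \in V\} \cup \{\pm\chi_u \pm \chi_v : u, v \in V, u \ne v\}$. For $p, q \in \mathbb{Z}^V$, $\Phi(p,q) = \{\alpha \in \Phi : \|q - (p+\alpha)\|_1 = \|q-p\|_1 - \|\alpha\|_1\}$, and for $B \subseteq \mathbb{Z}^V$ and $p,q \in B$, $\Phi_B(p,q) = \{\alpha \in \Phi(p,q) : p + \alpha \in B\}$. *)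

theory Defs
  imports "HOL-Analysis.Analysis" "HOL-Library.Function_Algebras"
begin

text \<open>The ground set V is a finite type 'v (automatically nonempty);
  Z^V is 'v \<Rightarrow> int, and R^V is real ^ 'v.\<close>

definition supp :: "('v \<Rightarrow> int) \<Rightarrow> 'v set" where
  "supp t = {u. t u \<noteq> 0}"

definition norm1 :: "('v::finite \<Rightarrow> int) \<Rightarrow> int" where
  "norm1 p = (\<Sum>u\<in>UNIV. \<bar>p u\<bar>)"

definition unitv :: "'v \<Rightarrow> 'v \<Rightarrow> int" where
  "unitv u = (\<lambda>w. if w = u then 1 else 0)"

definition Phi :: "('v \<Rightarrow> int) set" where
  "Phi = {unitv u | u. True} \<union> {- unitv u | u. True}
       \<union> {(\<lambda>w. s * unitv u w + r * unitv v w) | u v s r. u \<noteq> v \<and> s \<in> {1, -1} \<and> r \<in> {1, -1}}"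

definition PhiPQ :: "('v::finite \<Rightarrow> int) \<Rightarrow> ('v \<Rightarrow> int) \<Rightarrow> ('v \<Rightarrow> int) set" where
  "PhiPQ p q = {\<alpha> \<in> Phi. norm1 (q - (p + \<alpha>)) = norm1 (q - p) - norm1 \<alpha>}"

definition PhiB :: "('v::finite \<Rightarrow> int) set \<Rightarrow> ('v \<Rightarrow> int) \<Rightarrow> ('v \<Rightarrow> int) \<Rightarrow> ('v \<Rightarrow> int) set" where
  "PhiB B p q = {\<alpha> \<in> PhiPQ p q. p + \<alpha> \<in> B}"

definition delta_exc :: "('v::finite \<Rightarrow> int) set \<Rightarrow> bool" where
  "delta_exc B \<longleftrightarrow> (\<forall>p\<in>B. \<forall>q\<in>B. \<forall>u\<in>supp (q - p). \<exists>\<alpha>\<in>PhiB B p q. u \<in> supp \<alpha>)"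

definition rvec :: "('v::finite \<Rightarrow> int) \<Rightarrow> real ^ 'v" where
  "rvec p = (\<chi> i. real_of_int (p i))"

definition hole_free :: "('v::finite \<Rightarrow> int) set \<Rightarrow> bool" where
  "hole_free B \<longleftrightarrow> B = {p. rvec p \<in> convex hull (rvec ` B)}"

end

theory Submission
  imports Defs
begin

definition mv :: "('v \<Rightarrow> int) \<Rightarrow> 'v \<Rightarrow> int \<Rightarrow> 'v \<Rightarrow> int \<Rightarrow> 'v \<Rightarrow> int" where
  "mv y u s v r = (\<lambda>w. y w + (if w = u then s else if w = v then r else 0))"

lemma sum_mv:
  fixes f :: "'v::finite \<Rightarrow> int \<Rightarrow> int"
  assumes "r \<noteq> 0 \<Longrightarrow> u \<noteq> v"
  shows "(\<Sum>w\<in>UNIV. f w (mv y u s v r w)) = (\<Sum>w\<in>UNIV. f w (y w))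
     + (f u (y u + s) - f u (y u)) + (f v (y v + r) - f v (y v))"
proof -
  let ?g = "\<lambda>w. f w (mv y u s v r w) - f w (y w)"
  have "(\<Sum>w\<in>UNIV. f w (mv y u s v r w)) - (\<Sum>w\<in>UNIV. f w (y w)) = (\<Sum>w\<in>UNIV. ?g w)"
    by (simp add: sum_subtractf)
  also have "\<dots> = (\<Sum>w\<in>{u,v}. ?g w)"
    by (rule sum.mono_neutral_right) (auto simp: mv_def)
  also have "\<dots> = (f u (y u + s) - f u (y u)) + (f v (y v + r) - f v (y v))"
  proof (cases "u = v")
    case True
    then have "r = 0" using assms by blast
    then show ?thesis using True by (simp add: mv_def)
  next
    case False
    then show ?thesis by (simp add: mv_def)
  qed
  finally show ?thesis by simp
qed

lemma phi_rep:
  assumes "\<alpha> \<in> Phi" "u \<in> supp \<alpha>"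
  shows "\<exists>s v r. (s = 1 \<or> s = -1) \<and> (r = 1 \<or> r = 0 \<or> r = -1) \<and> (r \<noteq> 0 \<longrightarrow> v \<noteq> u)
     \<and> \<alpha> = (\<lambda>w. if w = u then s else if w = v then r else 0)"
  using assms unfolding Phi_def supp_def
proof (elim UnE CollectE exE conjE)
  fix u' assume "\<alpha> = unitv u'" "\<alpha> u \<noteq> 0"
  then have "u' = u" by (auto simp: unitv_def split: if_splits)
  then show ?thesis using \<open>\<alpha> = unitv u'\<close>
    by (intro exI[of _ 1] exI[of _ u] exI[of _ 0]) (auto simp: unitv_def)
next
  fix u' assume "\<alpha> = - unitv u'" "\<alpha> u \<noteq> 0"
  then have "u' = u" by (auto simp: unitv_def fun_Compl_def split: if_splits)
  then show ?thesis using \<open>\<alpha> = - unitv u'\<close>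
    by (intro exI[of _ "-1"] exI[of _ u] exI[of _ 0]) (auto simp: unitv_def fun_Compl_def)
next
  fix u1 v1 s r assume a: "\<alpha> = (\<lambda>w. s * unitv u1 w + r * unitv v1 w)" "u1 \<noteq> v1"
    "s \<in> {1, -1}" "r \<in> {1, -1}" "\<alpha> u \<noteq> 0"
  then have "u = u1 \<or> u = v1" by (auto simp: unitv_def split: if_splits)
  then show ?thesis
  proof
    assume "u = u1"
    then show ?thesis using a
      by (intro exI[of _ s] exI[of _ v1] exI[of _ r]) (auto simp: unitv_def)
  next
    assume "u = v1"
    then show ?thesis using a
      by (intro exI[of _ r] exI[of _ u1] exI[of _ s]) (auto simp: unitv_def)
  qed
qed


lemma exch:
  assumes "delta_exc B" "p \<in> B" "q \<in> B" "q u \<noteq> p u"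
  shows "\<exists>s v r. (s = 1 \<or> s = -1) \<and> s * (q u - p u) > 0 \<and> (r = 1 \<or> r = 0 \<or> r = -1)
     \<and> (r \<noteq> 0 \<longrightarrow> v \<noteq> u \<and> r * (q v - p v) > 0) \<and> mv p u s v r \<in> B"
proof -
  have "u \<in> supp (q - p)" using assms(4) by (simp add: supp_def)
  then obtain \<alpha> where al: "\<alpha> \<in> PhiB B p q" "u \<in> supp \<alpha>"
    using assms unfolding delta_exc_def by blast
  then have aPhi: "\<alpha> \<in> Phi" and nrm: "norm1 (q - (p + \<alpha>)) = norm1 (q - p) - norm1 \<alpha>"
    and inB: "p + \<alpha> \<in> B"
    by (auto simp: PhiB_def PhiPQ_def)
  obtain s v r where sr: "s = 1 \<or> s = -1" "r = 1 \<or> r = 0 \<or> r = -1" "r \<noteq> 0 \<longrightarrow> v \<noteq> u"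
    and aeq: "\<alpha> = (\<lambda>w. if w = u then s else if w = v then r else 0)"
    using phi_rep[OF aPhi al(2)] by blast
  have hrv: "r \<noteq> 0 \<Longrightarrow> u \<noteq> v" using sr by auto
  have pa: "p + \<alpha> = mv p u s v r" by (rule ext) (simp add: aeq mv_def)
  have e1: "norm1 (q - (p + \<alpha>)) = (\<Sum>w\<in>UNIV. (\<lambda>w t. \<bar>q w - t\<bar>) w (mv p u s v r w))"
    by (simp add: norm1_def pa fun_diff_def)
  also have "\<dots> = (\<Sum>w\<in>UNIV. \<bar>q w - p w\<bar>) + (\<bar>q u - (p u + s)\<bar> - \<bar>q u - p u\<bar>)
       + (\<bar>q v - (p v + r)\<bar> - \<bar>q v - p v\<bar>)"
    by (rule sum_mv) (use sr in auto)
  finally have e1': "norm1 (q - (p + \<alpha>)) = (\<Sum>w\<in>UNIV. \<bar>q w - p w\<bar>) + (\<bar>q u - (p u + s)\<bar> - \<bar>q u - p u\<bar>)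
       + (\<bar>q v - (p v + r)\<bar> - \<bar>q v - p v\<bar>)" .
  have "norm1 \<alpha> = (\<Sum>w\<in>UNIV. (\<lambda>w t. \<bar>t\<bar>) w (mv (\<lambda>_. 0) u s v r w))"
    by (simp add: norm1_def aeq mv_def)
  also have "\<dots> = (\<Sum>w\<in>UNIV. \<bar>(0::int)\<bar>) + (\<bar>0 + s\<bar> - \<bar>0\<bar>) + (\<bar>0 + r\<bar> - \<bar>0\<bar>)"
    using sum_mv[where f="\<lambda>w t. \<bar>t\<bar>" and y="\<lambda>_. 0" and u=u and v=v and r=r and s=s, OF hrv] by simp
  finally have e2: "norm1 \<alpha> = \<bar>s\<bar> + \<bar>r\<bar>" by simp
  have e3: "norm1 (q - p) = (\<Sum>w\<in>UNIV. \<bar>q w - p w\<bar>)" by (simp add: norm1_def fun_diff_def)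
  have key: "(\<bar>q u - (p u + s)\<bar> - \<bar>q u - p u\<bar>) + (\<bar>q v - (p v + r)\<bar> - \<bar>q v - p v\<bar>) = - \<bar>s\<bar> - \<bar>r\<bar>"
    using nrm e1' e2 e3 by simp
  have k1: "\<bar>q u - (p u + s)\<bar> - \<bar>q u - p u\<bar> \<ge> - \<bar>s\<bar>" by simp
  have k2: "\<bar>q v - (p v + r)\<bar> - \<bar>q v - p v\<bar> \<ge> - \<bar>r\<bar>" by simp
  have h1: "\<bar>q u - (p u + s)\<bar> - \<bar>q u - p u\<bar> = - \<bar>s\<bar>" using key k1 k2 by linarith
  have h2: "\<bar>q v - (p v + r)\<bar> - \<bar>q v - p v\<bar> = - \<bar>r\<bar>" using key k1 k2 by linarith
  have "s * (q u - p u) > 0"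
    using sr(1)
  proof
    assume "s = 1" then show ?thesis using h1 by (simp; arith)
  next
    assume "s = -1" then show ?thesis using h1 by (simp; arith)
  qed
  moreover have "r \<noteq> 0 \<longrightarrow> r * (q v - p v) > 0"
  proof
    assume "r \<noteq> 0"
    then have "r = 1 \<or> r = -1" using sr(2) by auto
    then show "r * (q v - p v) > 0"
    proof
      assume "r = 1" then show ?thesis using h2 by (simp; arith)
    next
      assume "r = -1" then show ?thesis using h2 by (simp; arith)
    qed
  qed
  moreover have "mv p u s v r \<in> B" using inB pa by simp
  ultimately show ?thesis using sr(1,2,3)
    by (intro exI[of _ s] exI[of _ v] exI[of _ r]) blast
qed


lemma H_bad: fixes a b :: int shows "a \<noteq> 0 \<Longrightarrow> \<not>(a*b > 0 \<and> \<bar>b\<bar> \<ge> \<bar>a\<bar>) \<Longrightarrow> a*(b - a) < 0"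
  by (auto simp: zero_less_mult_iff mult_less_0_iff abs_if split: if_split_asm)
lemma H_tow: fixes a b s :: int shows "(a \<noteq> 0 \<longrightarrow> a*b > 0 \<and> \<bar>b\<bar> \<ge> \<bar>a\<bar>) \<Longrightarrow> b \<noteq> a \<Longrightarrow> (s = 1 \<or> s = -1) \<Longrightarrow> s*(a - b) > 0 \<Longrightarrow> \<bar>b + s\<bar> = \<bar>b\<bar> - 1"
  by (auto simp: zero_less_mult_iff mult_less_0_iff abs_if)
lemma H_s: fixes a t s :: int shows "(s = 1 \<or> s = -1) \<Longrightarrow> s*t > 0 \<Longrightarrow> a*t < 0 \<Longrightarrow> \<bar>a + s\<bar> = \<bar>a\<bar> - 1"
  by (auto simp: zero_less_mult_iff mult_less_0_iff abs_if)
lemma H_cs: fixes c t s :: int shows "(c = 1 \<or> c = 0 \<or> c = -1) \<Longrightarrow> (s = 1 \<or> s = -1) \<Longrightarrow> c*t < 0 \<Longrightarrow> s*t > 0 \<Longrightarrow> c* s = -1"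
  by (auto simp: zero_less_mult_iff mult_less_0_iff)
lemma H_r: fixes a r :: int shows "(r = 1 \<or> r = 0 \<or> r = -1) \<Longrightarrow> \<bar>a + r\<bar> - \<bar>a\<bar> \<le> \<bar>r\<bar> \<and> (\<bar>a + r\<bar> - \<bar>a\<bar> = 1 \<longrightarrow> r \<noteq> 0 \<and> a * r \<ge> 0)"
  by (auto simp: abs_if)
lemma H_cz: fixes c b s :: int shows "(c = 1 \<or> c = 0 \<or> c = -1) \<Longrightarrow> (s = 1 \<or> s = -1) \<Longrightarrow> c*b = \<bar>b\<bar> \<Longrightarrow> b \<noteq> 0 \<Longrightarrow> \<bar>b + s\<bar> = \<bar>b\<bar> - 1 \<Longrightarrow> c* s = -1"
  by (auto simp: abs_if split: if_split_asm)
lemma H_eq: fixes a b :: int shows "(a \<noteq> 0 \<longrightarrow> a*b > 0 \<and> \<bar>b\<bar> \<ge> \<bar>a\<bar>) \<Longrightarrow> \<bar>b\<bar> = \<bar>a\<bar> \<Longrightarrow> b = a"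
  by (auto simp: zero_less_mult_iff abs_if split: if_split_asm)

definition N :: "('v::finite \<Rightarrow> int) \<Rightarrow> ('v \<Rightarrow> int) \<Rightarrow> int" where
  "N y z = (\<Sum>w\<in>UNIV. \<bar>y w - z w\<bar>)"

lemma N_nonneg: "N y z \<ge> 0" by (simp add: N_def sum_nonneg)

lemma N_mv:
  assumes "r \<noteq> 0 \<Longrightarrow> u \<noteq> v"
  shows "N q (mv y u s v r) = N q y + (\<bar>q u - (y u + s)\<bar> - \<bar>q u - y u\<bar>) + (\<bar>q v - (y v + r)\<bar> - \<bar>q v - y v\<bar>)"
  unfolding N_def using sum_mv[where f="\<lambda>w t. \<bar>q w - t\<bar>" and y=y and u=u and v=v and r=r and s=s, OF assms]
  by simp

lemma mv_at: "mv y u s v r w = y w + (if w = u then s else if w = v then r else 0)"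
  by (simp add: mv_def)

locale hfl =
  fixes B :: "('v::finite \<Rightarrow> int) set" and x :: "'v \<Rightarrow> int" and d :: int
  assumes exc: "delta_exc B"
    and dmin: "\<And>q. q \<in> B \<Longrightarrow> d \<le> (\<Sum>w\<in>UNIV. \<bar>q w - x w\<bar>)"
    and dex: "\<exists>p\<in>B. (\<Sum>w\<in>UNIV. \<bar>p w - x w\<bar>) = d"
begin

definition D where "D y = (\<Sum>w\<in>UNIV. \<bar>y w - x w\<bar>)"
definition M where "M = {p \<in> B. D p = d}"
definition cc where "cc w = (if \<exists>p\<in>M. p w > x w then 1 else if \<exists>p\<in>M. p w < x w then -1 else (0::int))"
definition Psi where "Psi y = (\<Sum>w\<in>UNIV. cc w * (y w - x w))"

lemma Dmin: "q \<in> B \<Longrightarrow> d \<le> D q" using dmin by (simp add: D_def)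
lemma D_nonneg: "D y \<ge> 0" by (simp add: D_def sum_nonneg)

lemma D_mv:
  assumes "r \<noteq> 0 \<Longrightarrow> u \<noteq> v"
  shows "D (mv y u s v r) = D y + (\<bar>y u + s - x u\<bar> - \<bar>y u - x u\<bar>) + (\<bar>y v + r - x v\<bar> - \<bar>y v - x v\<bar>)"
  unfolding D_def using sum_mv[where f="\<lambda>w t. \<bar>t - x w\<bar>" and y=y and u=u and v=v and r=r and s=s, OF assms]
  by simp

lemma Psi_mv:
  assumes "r \<noteq> 0 \<Longrightarrow> u \<noteq> v"
  shows "Psi (mv y u s v r) = Psi y + cc u * s + cc v * r"
  unfolding Psi_def using sum_mv[where f="\<lambda>w t. cc w * (t - x w)" and y=y and u=u and v=v and r=r and s=s, OF assms]
  by (simp add: algebra_simps)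

lemma cc_range: "cc w = 1 \<or> cc w = 0 \<or> cc w = -1"
  by (simp add: cc_def)

lemma cc_wit: "cc w \<noteq> 0 \<Longrightarrow> \<exists>p\<in>M. cc w * (p w - x w) > 0"
  unfolding cc_def by (auto split: if_splits)

lemma good:
  assumes pM: "p \<in> M" and qB: "q \<in> B" and g: "(p w - x w) * (q w - p w) < 0"
  shows "\<exists>s v r. r \<noteq> 0 \<and> v \<noteq> w \<and> r * (q v - p v) > 0 \<and> (p v - x v) * r \<ge> 0
     \<and> mv p w s v r \<in> M \<and> N q (mv p w s v r) < N q p \<and> s * (q w - p w) > 0 \<and> (s = 1 \<or> s = -1)"
proof -
  have pB: "p \<in> B" and Dp: "D p = d" using pM by (auto simp: M_def)
  have "q w \<noteq> p w" using g by auto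
  then obtain s v r where sr: "s = 1 \<or> s = -1" "s * (q w - p w) > 0" "r = 1 \<or> r = 0 \<or> r = -1"
    "r \<noteq> 0 \<longrightarrow> v \<noteq> w \<and> r * (q v - p v) > 0" and inB: "mv p w s v r \<in> B"
    using exch[OF exc pB qB] by blast
  have hr: "r \<noteq> 0 \<Longrightarrow> w \<noteq> v" using sr by auto
  have t1: "\<bar>p w + s - x w\<bar> = \<bar>p w - x w\<bar> - 1"
    using H_s[OF sr(1) sr(2), of "p w - x w"] g by (simp add: algebra_simps)
  have Dm: "D (mv p w s v r) = d - 1 + (\<bar>p v + r - x v\<bar> - \<bar>p v - x v\<bar>)"
    using D_mv[OF hr, where y=p] t1 Dp by simp
  have "d \<le> D (mv p w s v r)" using Dmin[OF inB] .
  with Dm have v1: "\<bar>p v + r - x v\<bar> - \<bar>p v - x v\<bar> \<ge> 1" by simp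
  have hv: "\<bar>(p v - x v) + r\<bar> - \<bar>p v - x v\<bar> \<le> \<bar>r\<bar> \<and> (\<bar>(p v - x v) + r\<bar> - \<bar>p v - x v\<bar> = 1 \<longrightarrow> r \<noteq> 0 \<and> (p v - x v) * r \<ge> 0)"
    using H_r[OF sr(3)] .
  have e1: "\<bar>p v + r - x v\<bar> - \<bar>p v - x v\<bar> = 1" using v1 hv sr(3) by (auto simp: algebra_simps)
  then have rnz: "r \<noteq> 0" and pvr: "(p v - x v) * r \<ge> 0" using hv by (auto simp: algebra_simps)
  have "D (mv p w s v r) = d" using Dm e1 by simp
  then have mM: "mv p w s v r \<in> M" using inB by (simp add: M_def)
  have n1: "\<bar>q w - (p w + s)\<bar> - \<bar>q w - p w\<bar> = -1"
    using sr(1,2) by (auto simp: abs_if zero_less_mult_iff)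
  have n2: "\<bar>q v - (p v + r)\<bar> - \<bar>q v - p v\<bar> = -1"
    using sr(3,4) rnz by (auto simp: abs_if zero_less_mult_iff)
  have "N q (mv p w s v r) = N q p - 2" using N_mv[OF hr, where q=q and y=p] n1 n2 by simp
  then show ?thesis using rnz sr pvr mM
    by (intro exI[of _ s] exI[of _ v] exI[of _ r]) auto
qed


lemma near:
  assumes e: "e = 1 \<or> e = -1" and qB: "q \<in> B" and qu: "e * (q u - x u) < 0"
    and pM: "p \<in> M" and pu: "e * (p u - x u) > 0"
    and pmin: "\<And>p'. p' \<in> M \<Longrightarrow> e * (p' u - x u) > 0 \<Longrightarrow> N q p \<le> N q p'"
  shows "e * (p u - x u) = 1"
    and "\<And>w. w \<noteq> u \<Longrightarrow> p w \<noteq> x w \<Longrightarrow> (p w - x w) * (q w - x w) > 0 \<and> \<bar>q w - x w\<bar> \<ge> \<bar>p w - x w\<bar>"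
proof -
  show "e * (p u - x u) = 1"
  proof (rule ccontr)
    assume "e * (p u - x u) \<noteq> 1"
    then have ge2: "e * (p u - x u) \<ge> 2" using pu by simp
    have g: "(p u - x u) * (q u - p u) < 0"
      using e ge2 qu by (auto simp: mult_less_0_iff)
    obtain s v r where h: "r \<noteq> 0" "v \<noteq> u" "mv p u s v r \<in> M" "N q (mv p u s v r) < N q p"
      "s * (q u - p u) > 0" "s = 1 \<or> s = -1"
      using good[OF pM qB g] by blast
    have "s = - e" using e h(5,6) qu ge2 by (auto simp: zero_less_mult_iff)
    then have "e * (mv p u s v r u - x u) > 0" using e ge2 by (auto simp: mv_def algebra_simps)
    then have "N q p \<le> N q (mv p u s v r)" using pmin h(3) by blast
    then show False using h(4) by simp
  qed
next
  fix w assume wu: "w \<noteq> u" and pw: "p w \<noteq> x w"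
  show "(p w - x w) * (q w - x w) > 0 \<and> \<bar>q w - x w\<bar> \<ge> \<bar>p w - x w\<bar>"
  proof (rule ccontr)
    assume nc: "\<not> ?thesis"
    have g: "(p w - x w) * (q w - p w) < 0"
      using H_bad[of "p w - x w" "q w - x w"] pw nc by simp
    obtain s v r where h: "r \<noteq> 0" "v \<noteq> w" "r * (q v - p v) > 0" "(p v - x v) * r \<ge> 0"
      "mv p w s v r \<in> M" "N q (mv p w s v r) < N q p"
      using good[OF pM qB g] by blast
    have vu: "v \<noteq> u"
    proof
      assume "v = u"
      then show False using h(1,3,4) e pu qu
        by (auto simp: zero_less_mult_iff mult_less_0_iff zero_le_mult_iff)
    qed
    have "mv p w s v r u = p u" using wu vu by (simp add: mv_def)
    then have "N q p \<le> N q (mv p w s v r)" using pmin h(5) pu by simp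
    then show False using h(6) by simp
  qed
qed

lemma nearest_exists:
  assumes "P p0"
  shows "\<exists>p. P p \<and> (\<forall>p'. P p' \<longrightarrow> N q p \<le> N q p')"
proof -
  obtain p where "P p" and m: "\<And>p'. P p' \<Longrightarrow> nat (N q p) \<le> nat (N q p')"
    using ex_has_least_nat[of P p0 "\<lambda>z. nat (N q z)"] assms by blast
  moreover have "\<And>p'. P p' \<Longrightarrow> N q p \<le> N q p'"
    using m N_nonneg by (metis nat_le_eq_zle)
  ultimately show ?thesis by blast
qed

lemma D_split: "D y = \<bar>y u - x u\<bar> + (\<Sum>w\<in>UNIV - {u}. \<bar>y w - x w\<bar>)"
  unfolding D_def by (simp add: sum.remove)

lemma cons:
  assumes pM: "p \<in> M" and p'M: "p' \<in> M" and a: "p w < x w" and b: "x w < p' w"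
  shows False
proof -
  obtain p'' where pp: "p'' \<in> M \<and> 1 * (p'' w - x w) > 0"
    and pmin: "\<forall>z. z \<in> M \<and> 1 * (z w - x w) > 0 \<longrightarrow> N p p'' \<le> N p z"
    using nearest_exists[of "\<lambda>z. z \<in> M \<and> 1 * (z w - x w) > 0" p' p] p'M b by auto
  have pB: "p \<in> B" and Dp: "D p = d" using pM by (auto simp: M_def)
  have Dp'': "D p'' = d" using pp by (auto simp: M_def)
  have nr: "1 * (p'' w - x w) = 1"
    and cond: "\<And>z. z \<noteq> w \<Longrightarrow> p'' z \<noteq> x z \<Longrightarrow> (p'' z - x z) * (p z - x z) > 0 \<and> \<bar>p z - x z\<bar> \<ge> \<bar>p'' z - x z\<bar>"
    using near[of 1 p w p''] pB a pp pmin by auto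
  define E where "E z = \<bar>p z - x z\<bar> - \<bar>p'' z - x z\<bar>" for z
  have Enn: "\<And>z. z \<noteq> w \<Longrightarrow> E z \<ge> 0"
    using cond unfolding E_def by (metis abs_ge_zero abs_zero diff_ge_0_iff_ge diff_self)
  have "(\<Sum>z\<in>UNIV - {w}. E z) = (D p - \<bar>p w - x w\<bar>) - (D p'' - \<bar>p'' w - x w\<bar>)"
    unfolding E_def using D_split[of p w] D_split[of p'' w] by (simp add: sum_subtractf)
  also have "\<dots> \<le> 0" using Dp Dp'' nr a by simp
  finally have "(\<Sum>z\<in>UNIV - {w}. E z) \<le> 0" .
  moreover have "(\<Sum>z\<in>UNIV - {w}. E z) \<ge> 0" using Enn by (intro sum_nonneg) auto
  ultimately have "(\<Sum>z\<in>UNIV - {w}. E z) = 0" by simp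
  then have E0: "\<And>z. z \<noteq> w \<Longrightarrow> E z = 0"
    using sum_nonneg_eq_0_iff[of "UNIV - {w}" E] Enn by auto
  have same: "\<And>z. z \<noteq> w \<Longrightarrow> p z = p'' z"
  proof -
    fix z assume zw: "z \<noteq> w"
    have "(p'' z - x z \<noteq> 0 \<longrightarrow> (p'' z - x z) * (p z - x z) > 0 \<and> \<bar>p z - x z\<bar> \<ge> \<bar>p'' z - x z\<bar>)"
      using cond[OF zw] by simp
    moreover have "\<bar>p z - x z\<bar> = \<bar>p'' z - x z\<bar>" using E0[OF zw] by (simp add: E_def)
    ultimately have "p z - x z = p'' z - x z" using H_eq by blast
    then show "p z = p'' z" by simp
  qed
  have p''B: "p'' \<in> B" using pp by (simp add: M_def)
  have "p'' w \<noteq> p w" using a pp by simp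
  then obtain s v r where sr: "s = 1 \<or> s = -1" "s * (p'' w - p w) > 0" "r = 1 \<or> r = 0 \<or> r = -1"
    "r \<noteq> 0 \<longrightarrow> v \<noteq> w \<and> r * (p'' v - p v) > 0" and inB: "mv p w s v r \<in> B"
    using exch[OF exc pB p''B] by blast
  have r0: "r = 0" using sr(4) same by force
  have s1: "s = 1" using sr(1,2) a pp by (auto simp: zero_less_mult_iff)
  have hr: "r \<noteq> 0 \<Longrightarrow> w \<noteq> v" using r0 by simp
  have "D (mv p w s v r) = d - 1" using D_mv[OF hr, where y=p] Dp r0 s1 a by simp
  then show False using Dmin[OF inB] by simp
qed

lemma cM: "p \<in> M \<Longrightarrow> cc w * (p w - x w) = \<bar>p w - x w\<bar>"
proof -
  assume pM: "p \<in> M"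
  consider "p w > x w" | "p w < x w" | "p w = x w" by linarith
  then show ?thesis
  proof cases
    case 1 then have "cc w = 1" using pM unfolding cc_def by auto
    then show ?thesis using 1 by simp
  next
    case 2
    have "\<not> (\<exists>p'\<in>M. p' w > x w)" using cons[OF pM _ 2] by blast
    then have "cc w = -1" using pM 2 unfolding cc_def by auto
    then show ?thesis using 2 by simp
  qed simp
qed

lemma Psi_M: "p \<in> M \<Longrightarrow> Psi p = d"
  unfolding Psi_def using cM by (simp add: M_def D_def)


lemma toward_gen:
  assumes c1: "p w \<noteq> x w \<Longrightarrow> (p w - x w) * (q w - x w) > 0 \<and> \<bar>q w - x w\<bar> \<ge> \<bar>p w - x w\<bar>"
    and ne: "q w \<noteq> p w" and s: "s = 1 \<or> s = -1" and sp: "s * (p w - q w) > 0"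
  shows "\<bar>q w + s - x w\<bar> = \<bar>q w - x w\<bar> - 1"
proof -
  have a: "p w - x w \<noteq> 0 \<longrightarrow> (p w - x w) * (q w - x w) > 0 \<and> \<bar>q w - x w\<bar> \<ge> \<bar>p w - x w\<bar>"
    using c1 by simp
  have b: "q w - x w \<noteq> p w - x w" using ne by simp
  have c: "s * ((p w - x w) - (q w - x w)) > 0" using sp by simp
  have "\<bar>(q w - x w) + s\<bar> = \<bar>q w - x w\<bar> - 1" using H_tow[OF a b s c] .
  then show ?thesis by (simp add: algebra_simps)
qed

lemma main: "q \<in> B \<Longrightarrow> d \<le> Psi q"
proof (induction "nat (D q)" arbitrary: q rule: less_induct)
  case less
  have qB: "q \<in> B" by (rule less.prems)
  have IH: "\<And>q'. q' \<in> B \<Longrightarrow> D q' < D q \<Longrightarrow> d \<le> Psi q'"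
  proof -
    fix q' assume a: "q' \<in> B" "D q' < D q"
    then have "nat (D q') < nat (D q)" using D_nonneg[of q'] by simp
    then show "d \<le> Psi q'" using less.hyps a(1) by blast
  qed
  show ?case
  proof (cases "D q = d")
    case True then show ?thesis using Psi_M qB by (simp add: M_def)
  next
    case False
    with Dmin[OF qB] have Dq: "D q > d" by simp
    obtain p0 where "p0 \<in> M" using dex by (auto simp: M_def D_def)
    then obtain p where pM: "p \<in> M" and pmin: "\<forall>p'. p' \<in> M \<longrightarrow> N q p \<le> N q p'"
      using nearest_exists[of "\<lambda>z. z \<in> M" p0 q] by auto
    have pB: "p \<in> B" and Dp: "D p = d" using pM by (auto simp: M_def)
    have trm: "\<And>w. p w \<noteq> x w \<Longrightarrow> (p w - x w) * (q w - x w) > 0 \<and> \<bar>q w - x w\<bar> \<ge> \<bar>p w - x w\<bar>"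
    proof -
      fix w assume pw: "p w \<noteq> x w"
      show "(p w - x w) * (q w - x w) > 0 \<and> \<bar>q w - x w\<bar> \<ge> \<bar>p w - x w\<bar>"
      proof (rule ccontr)
        assume nc: "\<not> ?thesis"
        have g: "(p w - x w) * (q w - p w) < 0"
          using H_bad[of "p w - x w" "q w - x w"] pw nc by simp
        obtain s v r where "mv p w s v r \<in> M" "N q (mv p w s v r) < N q p"
          using good[OF pM qB g] by blast
        then show False using pmin by force
      qed
    qed
    have tow: "\<And>w s. q w \<noteq> p w \<Longrightarrow> s = 1 \<or> s = -1 \<Longrightarrow> s * (p w - q w) > 0
        \<Longrightarrow> \<bar>q w + s - x w\<bar> = \<bar>q w - x w\<bar> - 1"
      using toward_gen trm by blast
    show ?thesis
    proof (cases "\<exists>w. q w \<noteq> p w \<and> cc w * (p w - q w) < 0")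
      case True
      then obtain w where w: "q w \<noteq> p w" "cc w * (p w - q w) < 0" by blast
      have "p w \<noteq> q w" using w by simp
      then obtain s v r where sr: "s = 1 \<or> s = -1" "s * (p w - q w) > 0" "r = 1 \<or> r = 0 \<or> r = -1"
        "r \<noteq> 0 \<longrightarrow> v \<noteq> w \<and> r * (p v - q v) > 0" and inB: "mv q w s v r \<in> B"
        using exch[OF exc qB pB] by blast
      have hr: "r \<noteq> 0 \<Longrightarrow> w \<noteq> v" using sr by auto
      have t1: "\<bar>q w + s - x w\<bar> - \<bar>q w - x w\<bar> = -1" using tow[OF w(1) sr(1) sr(2)] by simp
      have t2: "\<bar>q v + r - x v\<bar> - \<bar>q v - x v\<bar> \<le> 0"
      proof (cases "r = 0")
        case True then show ?thesis by simp
      next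
        case False
        then have rr: "r * (p v - q v) > 0" "r = 1 \<or> r = -1" using sr by auto
        then have "q v \<noteq> p v" by auto
        then show ?thesis using tow[OF _ rr(2) rr(1)] by simp
      qed
      have "D (mv q w s v r) < D q" using D_mv[OF hr, where y=q] t1 t2 by simp
      then have "d \<le> Psi (mv q w s v r)" using IH inB by blast
      moreover have "Psi (mv q w s v r) = Psi q + cc w * s + cc v * r" using Psi_mv[OF hr] by simp
      moreover have "cc w * s = -1" using H_cs[OF cc_range sr(1) w(2) sr(2)] .
      moreover have "cc v * r \<le> 1" using cc_range[of v] sr(3) by auto
      ultimately show ?thesis by simp
    next
      case False
      then have nc: "\<And>w. q w \<noteq> p w \<Longrightarrow> cc w * (p w - q w) \<ge> 0" by (meson not_less)
      have agree: "\<And>w. p w \<noteq> x w \<Longrightarrow> q w = p w"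
      proof -
        fix w assume pw: "p w \<noteq> x w"
        show "q w = p w"
        proof (rule ccontr)
          assume qw: "q w \<noteq> p w"
          have c: "cc w * (p w - x w) = \<bar>p w - x w\<bar>" using cM[OF pM] .
          have t: "(p w - x w) * (q w - x w) > 0 \<and> \<bar>q w - x w\<bar> \<ge> \<bar>p w - x w\<bar>" using trm pw by simp
          have "cc w * (p w - q w) \<ge> 0" using nc qw by simp
          then show False using c t pw qw cc_range[of w]
            by (auto simp: zero_less_mult_iff abs_if split: if_split_asm)
        qed
      qed
      show ?thesis
      proof (rule ccontr)
        assume "\<not> d \<le> Psi q"
        then have Pl: "Psi q < d" by simp
        have "\<And>w. cc w * (q w - p w) = cc w * (q w - x w) - cc w * (p w - x w)"
          by (simp add: algebra_simps)
        then have "(\<Sum>w\<in>UNIV. cc w * (q w - p w)) = Psi q - Psi p"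
          unfolding Psi_def by (simp add: sum_subtractf)
        with Psi_M[OF pM] Pl have "(\<Sum>w\<in>UNIV. cc w * (q w - p w)) < 0" by simp
        then obtain u where u: "cc u * (q u - p u) < 0" by (meson not_less sum_nonneg)
        have qpu: "q u \<noteq> p u" using u by auto
        have pu: "p u = x u" using agree qpu by blast
        obtain s v r where sr: "s = 1 \<or> s = -1" "s * (q u - p u) > 0" "r = 1 \<or> r = 0 \<or> r = -1"
          "r \<noteq> 0 \<longrightarrow> v \<noteq> u \<and> r * (q v - p v) > 0" and inB: "mv p u s v r \<in> B"
          using exch[OF exc pB qB qpu] by blast
        have hr: "r \<noteq> 0 \<Longrightarrow> u \<noteq> v" using sr by auto
        have cs: "cc u * s = -1" using H_cs[OF cc_range sr(1) u sr(2)] .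
        have rv: "r \<noteq> 0 \<Longrightarrow> p v = x v \<and> cc v * r \<le> 0"
        proof -
          assume rn: "r \<noteq> 0"
          then have rr: "r * (q v - p v) > 0" "r = 1 \<or> r = -1" using sr by auto
          then have qv: "q v \<noteq> p v" by auto
          then have "cc v * (p v - q v) \<ge> 0" using nc by simp
          then have "cc v * r \<le> 0" using rr cc_range[of v]
            by (auto simp: zero_less_mult_iff zero_le_mult_iff)
          moreover have "p v = x v" using agree qv by blast
          ultimately show ?thesis by simp
        qed
        define q' where "q' = mv p u s v r"
        have Dq': "D q' = d + 1 + \<bar>r\<bar>"
        proof (cases "r = 0")
          case True
          then show ?thesis unfolding q'_def using D_mv[OF hr, where y=p] Dp pu sr(1) by auto
        next
          case False
          then show ?thesis unfolding q'_def using D_mv[OF hr, where y=p] Dp pu sr(1) rv by auto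
        qed
        have Pq': "Psi q' \<le> d - 1"
        proof (cases "r = 0")
          case True
          then show ?thesis unfolding q'_def using Psi_mv[OF hr, where y=p] Psi_M[OF pM] cs by simp
        next
          case False
          then show ?thesis unfolding q'_def using Psi_mv[OF hr, where y=p] Psi_M[OF pM] cs rv by simp
        qed
        have q'B: "q' \<in> B" using inB by (simp add: q'_def)
        have Dle: "D q \<le> D q'"
        proof (rule ccontr)
          assume "\<not> D q \<le> D q'"
          then have "d \<le> Psi q'" using IH q'B by simp
          then show False using Pq' by simp
        qed
        have pw: "\<And>w. \<bar>q w - x w\<bar> \<ge> \<bar>q' w - x w\<bar> \<and> (q w \<noteq> q' w \<longrightarrow> \<bar>q w - x w\<bar> > \<bar>q' w - x w\<bar>)"
        proof -
          fix w
          consider "w = u" | "w \<noteq> u" "r \<noteq> 0" "w = v" | "w \<noteq> u" "r = 0 \<or> w \<noteq> v" by blast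
          then show "\<bar>q w - x w\<bar> \<ge> \<bar>q' w - x w\<bar> \<and> (q w \<noteq> q' w \<longrightarrow> \<bar>q w - x w\<bar> > \<bar>q' w - x w\<bar>)"
          proof cases
            case 1
            have "q' w = x w + s" using 1 pu by (simp add: q'_def mv_def)
            moreover have "s * (q w - x w) > 0" using 1 pu sr(2) by simp
            ultimately show ?thesis using sr(1)
              by (auto simp: zero_less_mult_iff abs_if)
          next
            case 2
            have pv: "p v = x v" using rv 2 by blast
            have "q' w = x w + r" using 2 pv by (simp add: q'_def mv_def)
            moreover have "r * (q w - x w) > 0" using 2 pv sr(4) by simp
            moreover have "r = 1 \<or> r = -1" using 2 sr(3) by auto
            ultimately show ?thesis
              by (auto simp: zero_less_mult_iff abs_if)
          next
            case 3
            have q'w: "q' w = p w" using 3 by (auto simp: q'_def mv_def)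
            show ?thesis
            proof (cases "q w = p w")
              case True then show ?thesis using q'w by simp
            next
              case False
              then have "p w = x w" using agree by blast
              then show ?thesis using q'w False by simp
            qed
          qed
        qed
        have "(\<Sum>w\<in>UNIV. \<bar>q w - x w\<bar> - \<bar>q' w - x w\<bar>) = D q - D q'"
          unfolding D_def by (simp add: sum_subtractf)
        also have "\<dots> \<le> 0" using Dle by simp
        finally have "(\<Sum>w\<in>UNIV. \<bar>q w - x w\<bar> - \<bar>q' w - x w\<bar>) \<le> 0" .
        moreover have "\<And>w. \<bar>q w - x w\<bar> - \<bar>q' w - x w\<bar> \<ge> 0" using pw by (simp add: algebra_simps)
        ultimately have Z: "\<And>w. \<bar>q w - x w\<bar> - \<bar>q' w - x w\<bar> = 0"
          using sum_nonneg_eq_0_iff[of UNIV "\<lambda>w. \<bar>q w - x w\<bar> - \<bar>q' w - x w\<bar>"]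
          by (metis (no_types, lifting) UNIV_I antisym finite sum_nonneg)
        have qeq: "\<And>w. q w = q' w"
        proof -
          fix w show "q w = q' w" using pw[of w] Z[of w] by fastforce
        qed
        have quq: "q u - x u = s" using qeq[of u] pu by (simp add: q'_def mv_def)
        have qz: "\<And>z. z \<noteq> u \<Longrightarrow> (r \<noteq> 0 \<longrightarrow> z \<noteq> v) \<Longrightarrow> q z = p z"
          using qeq by (auto simp: q'_def mv_def)
        have DqE: "D q = d + 1 + \<bar>r\<bar>" using Dq' qeq by (metis ext)
        have PsiqE: "Psi q \<le> d - 1" using Pq' qeq by (metis ext)
        define e where "e = cc u"
        have es: "e = - s" using cs sr(1) cc_range[of u] unfolding e_def by auto
        have e1: "e = 1 \<or> e = -1" using es sr(1) by auto
        obtain p0 where "p0 \<in> M" "e * (p0 u - x u) > 0"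
          using cc_wit[of u] es sr(1) unfolding e_def by auto
        then obtain p'' where pp: "p'' \<in> M \<and> e * (p'' u - x u) > 0"
          and pmin'': "\<forall>z. z \<in> M \<and> e * (z u - x u) > 0 \<longrightarrow> N q p'' \<le> N q z"
          using nearest_exists[of "\<lambda>z. z \<in> M \<and> e * (z u - x u) > 0" p0 q] by auto
        have equ: "e * (q u - x u) < 0" using quq es sr(1) by auto
        have nr: "e * (p'' u - x u) = 1"
          and cond: "\<And>w. w \<noteq> u \<Longrightarrow> p'' w \<noteq> x w \<Longrightarrow> (p'' w - x w) * (q w - x w) > 0 \<and> \<bar>q w - x w\<bar> \<ge> \<bar>p'' w - x w\<bar>"
          using near[OF e1 qB equ, of p''] pp pmin'' by auto
        have p''B: "p'' \<in> B" and Dp'': "D p'' = d" using pp by (auto simp: M_def)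
        have tow2: "\<And>w s'. q w \<noteq> p'' w \<Longrightarrow> s' = 1 \<or> s' = -1 \<Longrightarrow> s' * (p'' w - q w) > 0
            \<Longrightarrow> \<bar>q w + s' - x w\<bar> = \<bar>q w - x w\<bar> - 1"
        proof -
          fix w s' assume a: "q w \<noteq> p'' w" "s' = 1 \<or> s' = -1" "s' * (p'' w - q w) > 0"
          show "\<bar>q w + s' - x w\<bar> = \<bar>q w - x w\<bar> - 1"
          proof (cases "w = u")
            case True
            then show ?thesis using a nr quq es e1 by (auto simp: zero_less_mult_iff)
          next
            case False
            then show ?thesis using toward_gen[of p'' w q s'] cond a by blast
          qed
        qed
        define E where "E z = \<bar>q z - x z\<bar> - \<bar>p'' z - x z\<bar>" for z
        have Enn: "\<And>z. z \<noteq> u \<Longrightarrow> E z \<ge> 0"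
          using cond unfolding E_def by (metis abs_ge_zero abs_zero diff_ge_0_iff_ge diff_self)
        have sumE: "(\<Sum>z\<in>UNIV - {u}. E z) = 1 + \<bar>r\<bar>"
        proof -
          have "(\<Sum>z\<in>UNIV - {u}. E z) = (D q - \<bar>q u - x u\<bar>) - (D p'' - \<bar>p'' u - x u\<bar>)"
            unfolding E_def using D_split[of q u] D_split[of p'' u] by (simp add: sum_subtractf)
          moreover have "\<bar>q u - x u\<bar> = 1" using quq sr(1) by auto
          moreover have "\<bar>p'' u - x u\<bar> = 1" using nr e1 by auto
          ultimately show ?thesis using DqE Dp'' by simp
        qed
        obtain z where zu: "z \<noteq> u" and zv: "r \<noteq> 0 \<longrightarrow> z \<noteq> v" and Ez: "E z > 0"
        proof (cases "r = 0")
          case True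
          have "\<exists>z\<in>UNIV - {u}. E z > 0"
          proof (rule ccontr)
            assume "\<not> ?thesis"
            then have "(\<Sum>z\<in>UNIV - {u}. E z) \<le> 0" by (intro sum_nonpos) (auto simp: not_less)
            then show False using sumE by simp
          qed
          then show ?thesis using that True by blast
        next
          case False
          have vu: "v \<noteq> u" using hr False by auto
          have pv: "p v = x v" using rv False by blast
          have "q v = p v + r" using qeq[of v] vu by (simp add: q'_def mv_def)
          then have "E v \<le> 1" using pv sr(3) unfolding E_def by auto
          moreover have "(\<Sum>z\<in>UNIV - {u}. E z) = E v + (\<Sum>z\<in>UNIV - {u} - {v}. E z)"
            using vu by (subst sum.remove[of _ v]) auto
          ultimately have S: "(\<Sum>z\<in>UNIV - {u} - {v}. E z) \<ge> 1" using sumE False by simp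
          have "\<exists>z\<in>UNIV - {u} - {v}. E z > 0"
          proof (rule ccontr)
            assume "\<not> ?thesis"
            then have "(\<Sum>z\<in>UNIV - {u} - {v}. E z) \<le> 0" by (intro sum_nonpos) (auto simp: not_less)
            then show False using S by simp
          qed
          then show ?thesis using that by blast
        qed
        have qzp: "q z = p z" using qz zu zv by blast
        have qzx: "q z - x z \<noteq> 0" using Ez unfolding E_def by auto
        have czq: "cc z * (q z - x z) = \<bar>q z - x z\<bar>" using cM[OF pM, of z] qzp by simp
        have qzp'': "p'' z \<noteq> q z" using Ez unfolding E_def by auto
        obtain s' v' r' where sr': "s' = 1 \<or> s' = -1" "s' * (p'' z - q z) > 0" "r' = 1 \<or> r' = 0 \<or> r' = -1"
          "r' \<noteq> 0 \<longrightarrow> v' \<noteq> z \<and> r' * (p'' v' - q v') > 0" and inB'': "mv q z s' v' r' \<in> B"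
          using exch[OF exc qB p''B qzp''] by blast
        have hr': "r' \<noteq> 0 \<Longrightarrow> z \<noteq> v'" using sr' by auto
        have t1: "\<bar>q z + s' - x z\<bar> = \<bar>q z - x z\<bar> - 1" using tow2[OF _ sr'(1) sr'(2)] qzp'' by auto
        have cz: "cc z * s' = -1"
          using H_cz[OF cc_range sr'(1) czq qzx] t1 by (simp add: algebra_simps)
        have t2: "\<bar>q v' + r' - x v'\<bar> - \<bar>q v' - x v'\<bar> \<le> 0"
        proof (cases "r' = 0")
          case True then show ?thesis by simp
        next
          case False
          then have rr: "r' * (p'' v' - q v') > 0" "r' = 1 \<or> r' = -1" using sr' by auto
          then have "q v' \<noteq> p'' v'" by auto
          then show ?thesis using tow2[OF _ rr(2) rr(1)] by simp
        qed
        have "D (mv q z s' v' r') < D q" using D_mv[OF hr', where y=q] t1 t2 by simp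
        then have "d \<le> Psi (mv q z s' v' r')" using IH inB'' by blast
        moreover have "Psi (mv q z s' v' r') = Psi q + cc z * s' + cc v' * r'" using Psi_mv[OF hr'] by simp
        moreover have "cc v' * r' \<le> 1" using cc_range[of v'] sr'(3) by auto
        ultimately show False using cz PsiqE by simp
      qed
    qed
  qed
qed

end


lemma inner_rvec:
  fixes c :: "'v::finite \<Rightarrow> int"
  shows "inner (\<chi> w. real_of_int (c w)) (rvec z) = real_of_int (\<Sum>w\<in>UNIV. c w * z w)"
  by (simp add: rvec_def inner_vec_def)

theorem mainTheorem3:
  fixes B :: "('v::finite \<Rightarrow> int) set"
  assumes "B \<noteq> {}"
    and "delta_exc B"
  shows "hole_free B"
proof -
  have sub1: "B \<subseteq> {p. rvec p \<in> convex hull (rvec ` B)}"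
    by (auto intro: hull_inc)
  have sub2: "{p. rvec p \<in> convex hull (rvec ` B)} \<subseteq> B"
  proof
    fix y assume "y \<in> {p. rvec p \<in> convex hull (rvec ` B)}"
    then have yh: "rvec y \<in> convex hull (rvec ` B)" by simp
    show "y \<in> B"
    proof (rule ccontr)
      assume yB: "y \<notin> B"
      obtain p0 where p0: "p0 \<in> B" using assms(1) by blast
      obtain p where pB: "p \<in> B"
        and pm: "\<And>q. q \<in> B \<Longrightarrow> nat (\<Sum>w\<in>UNIV. \<bar>p w - y w\<bar>) \<le> nat (\<Sum>w\<in>UNIV. \<bar>q w - y w\<bar>)"
        using ex_has_least_nat[of "\<lambda>z. z \<in> B" p0 "\<lambda>z. nat (\<Sum>w\<in>UNIV. \<bar>z w - y w\<bar>)"] p0 by blast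
      define d where "d = (\<Sum>w\<in>UNIV. \<bar>p w - y w\<bar>)"
      have dmin: "\<And>q. q \<in> B \<Longrightarrow> d \<le> (\<Sum>w\<in>UNIV. \<bar>q w - y w\<bar>)"
      proof -
        fix q assume "q \<in> B"
        then have "nat d \<le> nat (\<Sum>w\<in>UNIV. \<bar>q w - y w\<bar>)" using pm d_def by simp
        moreover have "(\<Sum>w\<in>UNIV. \<bar>q w - y w\<bar>) \<ge> 0" by (simp add: sum_nonneg)
        ultimately show "d \<le> (\<Sum>w\<in>UNIV. \<bar>q w - y w\<bar>)" by (metis nat_le_eq_zle)
      qed
      interpret H: hfl B y d
        by standard (use assms(2) dmin pB d_def in auto)
      have dpos: "d > 0"
      proof (rule ccontr)
        assume "\<not> d > 0"
        moreover have "d \<ge> 0" unfolding d_def by (simp add: sum_nonneg)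
        ultimately have "d = 0" by simp
        then have "\<And>w. \<bar>p w - y w\<bar> = 0"
          using sum_nonneg_eq_0_iff[of UNIV "\<lambda>w. \<bar>p w - y w\<bar>"] unfolding d_def by simp
        then have "p = y" by (simp add: fun_eq_iff)
        then show False using pB yB by simp
      qed
      define a where "a = (\<chi> w. real_of_int (H.cc w))"
      define t where "t = real_of_int (\<Sum>w\<in>UNIV. H.cc w * y w) + 1"
      have "rvec ` B \<subseteq> {z. inner a z \<ge> t}"
      proof
        fix z assume "z \<in> rvec ` B"
        then obtain q where qB: "q \<in> B" and zq: "z = rvec q" by blast
        have "d \<le> H.Psi q" using H.main[OF qB] .
        moreover have "H.Psi q = (\<Sum>w\<in>UNIV. H.cc w * q w) - (\<Sum>w\<in>UNIV. H.cc w * y w)"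
          unfolding H.Psi_def by (simp add: sum_subtractf algebra_simps)
        ultimately have "(\<Sum>w\<in>UNIV. H.cc w * q w) \<ge> (\<Sum>w\<in>UNIV. H.cc w * y w) + 1" using dpos by simp
        then have "real_of_int (\<Sum>w\<in>UNIV. H.cc w * q w) \<ge> t" unfolding t_def by linarith
        then show "z \<in> {z. inner a z \<ge> t}" using inner_rvec[of H.cc q] by (simp add: zq a_def)
      qed
      then have "convex hull (rvec ` B) \<subseteq> {z. inner a z \<ge> t}"
        by (rule hull_minimal) (rule convex_halfspace_ge)
      with yh have "inner a (rvec y) \<ge> t" by blast
      then show False using inner_rvec[of H.cc y] by (simp add: a_def t_def)
    qed
  qed
  show ?thesis unfolding hole_free_def using sub1 sub2 by blast
qed

end
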